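(* Let $I$ and $J$ be finite sets, let $g\in\mathbb{R}^J$, and for each $i\in I$ let $u_i:\mathbb{R}^J\to\mathbb{R}\cup\{-\infty\}$ be upper semicontinuous and concave with $u_i(x_i+rg)>u_i(x_i)$ for all $x_i\in\mathrm{dom}\,u_i$ and $r>0$. Let $x\in\mathbb{R}^{I\times J}$ be an allocation, define $D_i(y_i):=\sup\{r\in\mathbb{R}\mid u_i(x_i+y_i-rg)\ge u_i(x_i)\}$, and assume there is $\varepsilon>0$ such that for every $z\in\mathbb{R}^J$ with $|z|\le\varepsilon$ the optimal value of "maximize $\sum_{i\in I}D_i(y_i)$ over $y\in\mathbb{R}^{I\times J}$ subject to $\sum_{i\in I}y_i=z$" is finite. (1) If $x$ is Pareto efficient, then there is $p\in\mathbb{R}^J$ with $g\cdot p=1$ such that, for all $i\in I$, $p\cdot w_i\ge p\cdot x_i$ for all $w_i\in\mathbb{R}^J$ with $u_i(w_i)\ge u_i(x_i)$. (2) Conversely, if in addition each $u_i$ satisfies: whenever $u_i(y_i)>u_i(y_i')$ for some $y_i'\in\mathrm{dom}\,u_i$, then $y_i-\varepsilon' g\in\mathrm{dom}\,u_i$ for all small enough $\varepsilon'>0$, then the existence of such a price vector $p$ implies that $x$ is Pareto efficient.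
   Context: $\mathrm{dom}\,u_i=\{x\mid u_i(x)>-\infty\}$. Feasibility of allocations refers to the total $\sum_{i\in I}x_i$: an allocation $x'$ is feasible if $\sum_i x'_i=\sum_i x_i$, and $x$ is Pareto efficient if there is no feasible $x'$ with $u_i(x'_i)\ge u_i(x_i)$ for all $i$ and strict inequality for some $i$. *)

theory Defs
  imports "HOL-Analysis.Analysis" "HOL-Library.Extended_Real"
begin

text \<open>Extended-real valued functions R^J -> R \<union> {-\<infinity>} are modelled as
  functions into ereal that never take the value +\<infinity>.\<close>

definition edom :: "('a \<Rightarrow> ereal) \<Rightarrow> 'a set" where
  "edom u = {x. u x > -\<infinity>}"

definition usc_ext :: "('a::topological_space \<Rightarrow> ereal) \<Rightarrow> bool" where
  "usc_ext u \<longleftrightarrow> (\<forall>c::ereal. closed {x. c \<le> u x})"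

definition concave_ext :: "('a::real_vector \<Rightarrow> ereal) \<Rightarrow> bool" where
  "concave_ext u \<longleftrightarrow> convex {(x, r::real). ereal r \<le> u x}"

definition pareto_efficient ::
  "('i::finite \<Rightarrow> 'v::comm_monoid_add \<Rightarrow> ereal) \<Rightarrow> ('i \<Rightarrow> 'v) \<Rightarrow> bool" where
  "pareto_efficient u x \<longleftrightarrow>
     \<not> (\<exists>x'. (\<Sum>i\<in>UNIV. x' i) = (\<Sum>i\<in>UNIV. x i) \<and>
            (\<forall>i. u i (x' i) \<ge> u i (x i)) \<and> (\<exists>i. u i (x' i) > u i (x i)))"

text \<open>D_i(y_i) = sup {r. u_i(x_i + y_i - r g) \<ge> u_i(x_i)} (sup of the empty set is -\<infinity>).\<close>
definition Dfun :: "('v::real_vector \<Rightarrow> ereal) \<Rightarrow> 'v \<Rightarrow> 'v \<Rightarrow> 'v \<Rightarrow> ereal" where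
  "Dfun ui g xi yi = Sup (ereal ` {r::real. ui (xi + yi - r *\<^sub>R g) \<ge> ui xi})"

text \<open>Optimal value of: maximize \<Sum>i D_i(y_i) subject to \<Sum>i y_i = z
  (concave maximization: points where some D_i(y_i) = -\<infinity> are infeasible).\<close>
definition opt_value ::
  "('i::finite \<Rightarrow> 'v::real_vector \<Rightarrow> ereal) \<Rightarrow> 'v \<Rightarrow> ('i \<Rightarrow> 'v) \<Rightarrow> 'v \<Rightarrow> ereal" where
  "opt_value u g x z = Sup {(\<Sum>i\<in>UNIV. Dfun (u i) g (x i) (y i)) | y.
       (\<Sum>i\<in>UNIV. y i) = z \<and> (\<forall>i. Dfun (u i) g (x i) (y i) > -\<infinity>)}"

end

theory Submission
  imports Defs
begin

lemma superlevel_convex: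
  assumes "concave_ext f"
  shows "convex {w. ereal c \<le> f w}"
proof (rule convexI)
  fix a b :: 'a and s t :: real
  assume a: "a \<in> {w. ereal c \<le> f w}" and b: "b \<in> {w. ereal c \<le> f w}" and st: "0 \<le> s" "0 \<le> t" "s + t = 1"
  have H: "convex {(x, r::real). ereal r \<le> f x}" using assms unfolding concave_ext_def .
  have "s *\<^sub>R (a, c) + t *\<^sub>R (b, c) \<in> {(x, r::real). ereal r \<le> f x}"
    by (rule convexD[OF H]) (use a b st in auto)
  moreover have "s * c + t * c = c" using st by (metis distrib_right mult_1)
  ultimately show "s *\<^sub>R a + t *\<^sub>R b \<in> {w. ereal c \<le> f w}" by simp
qed

lemma concave_segment:
  assumes "concave_ext f" and fa: "f a = ereal A" and fb: "f b = ereal B" and Ac: "A > c"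
  shows "\<exists>t. 0 < t \<and> t \<le> 1 \<and> ereal c \<le> f ((1 - t) *\<^sub>R a + t *\<^sub>R b)"
proof -
  have H: "convex {(x, r::real). ereal r \<le> f x}" using assms(1) unfolding concave_ext_def .
  define t where "t = (A - c) / ((A - c) + \<bar>A - B\<bar>)"
  have t0: "0 < t" using Ac by (simp add: t_def)
  have t1: "t \<le> 1" using Ac by (simp add: t_def)
  have "(1 - t) *\<^sub>R (a, A) + t *\<^sub>R (b, B) \<in> {(x, r::real). ereal r \<le> f x}"
    by (rule convexD[OF H]) (use fa fb t0 t1 in auto)
  hence le: "ereal ((1 - t) * A + t * B) \<le> f ((1 - t) *\<^sub>R a + t *\<^sub>R b)" by simp
  have "t * \<bar>A - B\<bar> \<le> A - c"
  proof -
    have "t * \<bar>A - B\<bar> = (A - c) * (\<bar>A - B\<bar> / ((A - c) + \<bar>A - B\<bar>))" by (simp add: t_def)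
    also have "\<dots> \<le> (A - c) * 1"
      using Ac by (intro mult_left_mono) simp_all
    finally show ?thesis by simp
  qed
  moreover have "(1 - t) * A + t * B = A - t * (A - B)" by (simp add: algebra_simps)
  moreover have "t * (A - B) \<le> t * \<bar>A - B\<bar>" using t0 by (intro mult_left_mono) auto
  ultimately have "c \<le> (1 - t) * A + t * B" by linarith
  hence "ereal c \<le> f ((1 - t) *\<^sub>R a + t *\<^sub>R b)" using le order_trans ereal_less_eq(3) by metis
  thus ?thesis using t0 t1 by blast
qed


theorem corollary5p4:
  fixes u :: "'i::finite \<Rightarrow> real^'j::finite \<Rightarrow> ereal"
    and g :: "real^'j"
    and x :: "'i \<Rightarrow> real^'j"
    and \<epsilon> :: real
  assumes no_pinf: "\<And>i w. u i w \<noteq> \<infinity>"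
    and usc: "\<And>i. usc_ext (u i)"
    and conc: "\<And>i. concave_ext (u i)"
    and mono_g: "\<And>i xi r. xi \<in> edom (u i) \<Longrightarrow> r > 0 \<Longrightarrow> u i (xi + r *\<^sub>R g) > u i xi"
    and eps_pos: "\<epsilon> > 0"
    and finite_val: "\<And>z. norm z \<le> \<epsilon> \<Longrightarrow> opt_value u g x z \<noteq> \<infinity> \<and> opt_value u g x z \<noteq> -\<infinity>"
  shows "(pareto_efficient u x \<longrightarrow>
            (\<exists>p. g \<bullet> p = 1 \<and> (\<forall>i w. u i w \<ge> u i (x i) \<longrightarrow> p \<bullet> w \<ge> p \<bullet> x i)))
       \<and> ((\<forall>i y. (\<exists>y'. y' \<in> edom (u i) \<and> u i y > u i y') \<longrightarrow>
                    (\<forall>\<^sub>F e in at_right 0. y - e *\<^sub>R g \<in> edom (u i)))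
          \<longrightarrow> (\<exists>p. g \<bullet> p = 1 \<and> (\<forall>i w. u i w \<ge> u i (x i) \<longrightarrow> p \<bullet> w \<ge> p \<bullet> x i))
          \<longrightarrow> pareto_efficient u x)"
proof -
  have Dge0: "Dfun (u i) g (x i) 0 \<ge> ereal 0" for i
    unfolding Dfun_def by (rule Sup_upper) auto
  have xdom: "u i (x i) \<noteq> -\<infinity>" for i
  proof
    assume k: "u i (x i) = -\<infinity>"
    have "Dfun (u i) g (x i) 0 = Sup (ereal ` UNIV)" unfolding Dfun_def k by simp
    also have "\<dots> = \<infinity>"
      by (metis Sup_eq_top_iff ereal_infty_less(1) less_PInf_Ex_of_nat rangeI top_ereal_def)
    finally have Di: "Dfun (u i) g (x i) 0 = \<infinity>" .
    have sumI: "(\<Sum>j\<in>UNIV. Dfun (u j) g (x j) ((\<lambda>_. 0) j)) = \<infinity>"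
      using Di by (subst sum_Pinfty) auto
    have mem: "(\<Sum>j\<in>UNIV. Dfun (u j) g (x j) ((\<lambda>_. 0) j)) \<in> {(\<Sum>i\<in>UNIV. Dfun (u i) g (x i) (y i)) | y.
       (\<Sum>i\<in>UNIV. y i) = 0 \<and> (\<forall>i. Dfun (u i) g (x i) (y i) > -\<infinity>)}"
    proof -
      have "\<forall>j. Dfun (u j) g (x j) 0 > -\<infinity>" using Dge0
        by (metis MInfty_neq_ereal(1) ereal_infty_less(2) order_less_le_trans ereal_less(5))
      thus ?thesis by force
    qed
    have "opt_value u g x 0 = \<infinity>"
      unfolding opt_value_def using Sup_upper[OF mem] sumI by (simp add: top_ereal_def[symmetric] top_unique)
    thus False using finite_val[of 0] eps_pos by simp
  qed
  define c where "c i = real_of_ereal (u i (x i))" for i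
  have uc: "u i (x i) = ereal (c i)" for i
    unfolding c_def using xdom no_pinf by (cases "u i (x i)") auto
  have part2: "\<forall>i w. u i w \<ge> u i (x i) \<longrightarrow> p \<bullet> w \<ge> p \<bullet> x i \<Longrightarrow> g \<bullet> p = 1 \<Longrightarrow>
      (\<forall>i y. (\<exists>y'. y' \<in> edom (u i) \<and> u i y > u i y') \<longrightarrow>
                    (\<forall>\<^sub>F e in at_right 0. y - e *\<^sub>R g \<in> edom (u i))) \<Longrightarrow> pareto_efficient u x" for p
  proof -
    assume hp: "\<forall>i w. u i w \<ge> u i (x i) \<longrightarrow> p \<bullet> w \<ge> p \<bullet> x i" and gp: "g \<bullet> p = 1"
      and H: "\<forall>i y. (\<exists>y'. y' \<in> edom (u i) \<and> u i y > u i y') \<longrightarrow>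
                    (\<forall>\<^sub>F e in at_right 0. y - e *\<^sub>R g \<in> edom (u i))"
    show "pareto_efficient u x"
      unfolding pareto_efficient_def
    proof
      assume "\<exists>x'. (\<Sum>i\<in>UNIV. x' i) = (\<Sum>i\<in>UNIV. x i) \<and>
            (\<forall>i. u i (x' i) \<ge> u i (x i)) \<and> (\<exists>i. u i (x' i) > u i (x i))"
      then obtain x' k where sx: "(\<Sum>i\<in>UNIV. x' i) = (\<Sum>i\<in>UNIV. x i)"
        and ge: "\<And>i. u i (x' i) \<ge> u i (x i)" and gt: "u k (x' k) > u k (x k)" by blast
      have pge: "\<And>i. p \<bullet> x' i - p \<bullet> x i \<ge> 0" using hp ge by auto
      have "(\<Sum>i\<in>UNIV. p \<bullet> x' i - p \<bullet> x i) = p \<bullet> (\<Sum>i\<in>UNIV. x' i) - p \<bullet> (\<Sum>i\<in>UNIV. x i)"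
        by (simp add: inner_sum_right sum_subtractf)
      also have "\<dots> = 0" using sx by simp
      finally have "\<forall>i\<in>UNIV. p \<bullet> x' i - p \<bullet> x i = 0"
        using sum_nonneg_eq_0_iff[of UNIV "\<lambda>i. p \<bullet> x' i - p \<bullet> x i"] pge by simp
      hence eqk: "p \<bullet> x' k = p \<bullet> x k" by simp
      have "x k \<in> edom (u k)" using xdom[of k] unfolding edom_def by (simp add: uc)
      hence ev: "\<forall>\<^sub>F e in at_right 0. x' k - e *\<^sub>R g \<in> edom (u k)" using H gt by blast
      have "\<forall>\<^sub>F e in at_right (0::real). e > 0 \<and> x' k - e *\<^sub>R g \<in> edom (u k)"
        by (rule eventually_conj[OF eventually_at_right_less ev])
      then obtain e0 :: real where e0: "e0 > 0" "x' k - e0 *\<^sub>R g \<in> edom (u k)"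
        using eventually_happens[of _ "at_right (0::real)"] trivial_limit_at_right_real by blast
      obtain A where A: "u k (x' k) = ereal A"
        using gt no_pinf[of k "x' k"] by (cases "u k (x' k)") auto
      obtain B where B: "u k (x' k - e0 *\<^sub>R g) = ereal B"
        using e0(2) no_pinf[of k "x' k - e0 *\<^sub>R g"] unfolding edom_def by (cases "u k (x' k - e0 *\<^sub>R g)") auto
      have Ac: "A > c k" using gt A uc by simp
      obtain t where t: "0 < t" "t \<le> 1"
        and tc: "ereal (c k) \<le> u k ((1 - t) *\<^sub>R x' k + t *\<^sub>R (x' k - e0 *\<^sub>R g))"
        using concave_segment[OF conc A B Ac] by blast
      have "(1 - t) *\<^sub>R x' k + t *\<^sub>R (x' k - e0 *\<^sub>R g) = x' k - (t * e0) *\<^sub>R g"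
        by (simp add: algebra_simps)
      hence "u k (x' k - (t * e0) *\<^sub>R g) \<ge> u k (x k)" using tc uc by simp
      hence "p \<bullet> (x' k - (t * e0) *\<^sub>R g) \<ge> p \<bullet> x k" using hp by blast
      hence "p \<bullet> x' k - t * e0 \<ge> p \<bullet> x k" using gp by (simp add: inner_diff_right inner_commute)
      moreover have "t * e0 > 0" using t e0 by simp
      ultimately show False using eqk by simp
    qed
  qed
  have part1: "pareto_efficient u x \<Longrightarrow>
            (\<exists>p. g \<bullet> p = 1 \<and> (\<forall>i w. u i w \<ge> u i (x i) \<longrightarrow> p \<bullet> w \<ge> p \<bullet> x i))"
  proof -
    assume PE: "pareto_efficient u x"
    define T where "T = {(\<Sum>i\<in>UNIV. w i) - (\<Sum>i\<in>UNIV. x i) + r *\<^sub>R g | w r. r > 0 \<and> (\<forall>i. u i (w i) \<ge> u i (x i))}"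
    have Uc: "convex {w. ereal (c i) \<le> u i w}" for i by (rule superlevel_convex[OF conc])
    have "convex T"
      unfolding T_def
    proof (rule convexI, clarsimp)
      fix w1 w2 and r1 r2 s t :: real
      assume r1: "r1 > 0" and w1: "\<forall>i. u i (x i) \<le> u i (w1 i)"
        and r2: "r2 > 0" and w2: "\<forall>i. u i (x i) \<le> u i (w2 i)"
        and st: "0 \<le> s" "0 \<le> t" "s + t = 1"
      define w where "w i = s *\<^sub>R w1 i + t *\<^sub>R w2 i" for i
      have wi: "u i (x i) \<le> u i (w i)" for i
      proof -
        have "w i \<in> {w. ereal (c i) \<le> u i w}" unfolding w_def
          by (rule convexD[OF Uc]) (use w1 w2 st uc in auto)
        thus ?thesis using uc by simp
      qed
      have rpos: "s * r1 + t * r2 > 0"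
      proof (cases "s = 0")
        case True thus ?thesis using st r2 by simp
      next
        case False thus ?thesis using st r1 r2
          by (metis add_pos_nonneg mult_nonneg_nonneg mult_pos_pos order_le_less order_less_le)
      qed
      have "s *\<^sub>R ((\<Sum>i\<in>UNIV. w1 i) - (\<Sum>i\<in>UNIV. x i) + r1 *\<^sub>R g) +
            t *\<^sub>R ((\<Sum>i\<in>UNIV. w2 i) - (\<Sum>i\<in>UNIV. x i) + r2 *\<^sub>R g)
          = (\<Sum>i\<in>UNIV. w i) - (s + t) *\<^sub>R (\<Sum>i\<in>UNIV. x i) + (s * r1 + t * r2) *\<^sub>R g"
        unfolding w_def by (simp add: sum.distrib scaleR_sum_right algebra_simps)
      also have "\<dots> = (\<Sum>i\<in>UNIV. w i) - (\<Sum>i\<in>UNIV. x i) + (s * r1 + t * r2) *\<^sub>R g"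
        using st by simp
      finally show "\<exists>w r. s *\<^sub>R ((\<Sum>i\<in>UNIV. w1 i) - (\<Sum>i\<in>UNIV. x i) + r1 *\<^sub>R g) +
            t *\<^sub>R ((\<Sum>i\<in>UNIV. w2 i) - (\<Sum>i\<in>UNIV. x i) + r2 *\<^sub>R g)
          = (\<Sum>i\<in>UNIV. w i) - (\<Sum>i\<in>UNIV. x i) + r *\<^sub>R g \<and> 0 < r \<and> (\<forall>i. u i (x i) \<le> u i (w i))"
        using rpos wi by blast
    qed
    have "0 \<notin> T"
    proof
      assume "0 \<in> T"
      then obtain w r where e: "(\<Sum>i\<in>UNIV. w i) - (\<Sum>i\<in>UNIV. x i) + r *\<^sub>R g = 0"
        and r: "r > 0" and wge: "\<forall>i. u i (w i) \<ge> u i (x i)" unfolding T_def by (smt (verit) mem_Collect_eq)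
      obtain i0 :: 'i where True by blast
      define x' where "x' i = w i + (if i = i0 then r *\<^sub>R g else 0)" for i
      have "(\<Sum>i\<in>UNIV. x' i) = (\<Sum>i\<in>UNIV. w i) + r *\<^sub>R g"
        unfolding x'_def by (simp add: sum.distrib sum.delta)
      also have "\<dots> = (\<Sum>i\<in>UNIV. x i)" using e by (simp add: algebra_simps)
      finally have sx: "(\<Sum>i\<in>UNIV. x' i) = (\<Sum>i\<in>UNIV. x i)" .
      have wdom: "w i0 \<in> edom (u i0)"
        using wge xdom[of i0] unfolding edom_def
        by (metis ereal_infty_less(2) mem_Collect_eq order_less_le_trans uc ereal_less(5) MInfty_neq_ereal(1))
      have "u i0 (x' i0) > u i0 (w i0)" unfolding x'_def using mono_g[OF wdom r] by simp
      hence gt: "u i0 (x' i0) > u i0 (x i0)" using wge order_le_less_trans by blast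
      have ge: "\<forall>i. u i (x' i) \<ge> u i (x i)"
      proof
        fix i show "u i (x' i) \<ge> u i (x i)"
          using gt wge by (cases "i = i0") (auto simp: x'_def less_imp_le)
      qed
      show False using PE sx gt ge unfolding pareto_efficient_def by blast
    qed
    obtain a where a0: "a \<noteq> 0" and aT: "\<forall>v\<in>T. 0 \<le> a \<bullet> v"
      using separating_hyperplane_set_0[OF \<open>convex T\<close> \<open>0 \<notin> T\<close>] by blast
    have key: "0 \<le> a \<bullet> ((\<Sum>i\<in>UNIV. w i) - (\<Sum>i\<in>UNIV. x i)) + r * (a \<bullet> g)"
      if "\<forall>i. u i (w i) \<ge> u i (x i)" "r > 0" for w r
    proof -
      have "(\<Sum>i\<in>UNIV. w i) - (\<Sum>i\<in>UNIV. x i) + r *\<^sub>R g \<in> T" unfolding T_def using that by blast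
      hence "0 \<le> a \<bullet> ((\<Sum>i\<in>UNIV. w i) - (\<Sum>i\<in>UNIV. x i) + r *\<^sub>R g)" using aT by blast
      thus ?thesis by (simp only: inner_add_right inner_scaleR_right)
    qed
    have ag0: "a \<bullet> g \<ge> 0" using key[of x 1] by simp
    have agne: "a \<bullet> g \<noteq> 0"
    proof
      assume ag: "a \<bullet> g = 0"
      define z where "z = - (\<epsilon> / norm a) *\<^sub>R a"
      have nz: "norm z \<le> \<epsilon>" unfolding z_def using a0 eps_pos by simp
      have "opt_value u g x z \<noteq> -\<infinity>" using finite_val[OF nz] by simp
      hence "{(\<Sum>i\<in>UNIV. Dfun (u i) g (x i) (y i)) | y.
       (\<Sum>i\<in>UNIV. y i) = z \<and> (\<forall>i. Dfun (u i) g (x i) (y i) > -\<infinity>)} \<noteq> {}"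
        unfolding opt_value_def by (metis Sup_empty bot_ereal_def)
      then obtain y where sy: "(\<Sum>i\<in>UNIV. y i) = z" and Dy: "\<forall>i. Dfun (u i) g (x i) (y i) > -\<infinity>"
        by blast
      have "\<exists>r. u i (x i + y i - r *\<^sub>R g) \<ge> u i (x i)" for i
      proof (rule ccontr)
        assume "\<not> ?thesis"
        hence "Dfun (u i) g (x i) (y i) = -\<infinity>" unfolding Dfun_def by (auto simp: bot_ereal_def)
        thus False using Dy by auto
      qed
      then obtain rr where rr: "\<And>i. u i (x i + y i - rr i *\<^sub>R g) \<ge> u i (x i)" by metis
      define w where "w i = x i + y i - rr i *\<^sub>R g" for i
      have "0 \<le> a \<bullet> ((\<Sum>i\<in>UNIV. w i) - (\<Sum>i\<in>UNIV. x i)) + 1 * (a \<bullet> g)"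
        by (rule key) (use rr w_def in auto)
      also have "(\<Sum>i\<in>UNIV. w i) - (\<Sum>i\<in>UNIV. x i) = z - (\<Sum>i\<in>UNIV. rr i) *\<^sub>R g"
        unfolding w_def sy[symmetric] by (simp add: sum.distrib sum_subtractf scaleR_sum_left)
      finally have "0 \<le> a \<bullet> z" using ag by (simp add: inner_diff_right)
      moreover have "a \<bullet> z = - \<epsilon> * norm a"
        unfolding z_def using a0 by (simp add: power2_norm_eq_inner[symmetric] power2_eq_square)
      moreover have "\<epsilon> * norm a > 0" using a0 eps_pos by simp
      ultimately show False by simp
    qed
    hence agp: "a \<bullet> g > 0" using ag0 by simp
    have aS: "0 \<le> a \<bullet> ((\<Sum>i\<in>UNIV. w i) - (\<Sum>i\<in>UNIV. x i))"
      if wg: "\<forall>i. u i (w i) \<ge> u i (x i)" for w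
    proof (rule ccontr)
      let ?s = "a \<bullet> ((\<Sum>i\<in>UNIV. w i) - (\<Sum>i\<in>UNIV. x i))"
      assume "\<not> ?thesis"
      hence neg: "?s < 0" by simp
      define r where "r = - ?s / (2 * (a \<bullet> g))"
      have r: "r > 0" unfolding r_def using neg agp by (simp add: divide_neg_pos)
      have "r * (a \<bullet> g) = - ?s / 2" unfolding r_def using agp by simp
      thus False using key[OF wg r] neg by simp
    qed
    define p where "p = (1 / (a \<bullet> g)) *\<^sub>R a"
    have "g \<bullet> p = 1" unfolding p_def using agp by (simp add: inner_commute)
    moreover have "\<forall>i w. u i w \<ge> u i (x i) \<longrightarrow> p \<bullet> w \<ge> p \<bullet> x i"
    proof (intro allI impI)
      fix i w assume uw: "u i w \<ge> u i (x i)"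
      define w' where "w' j = x j + (if j = i then w - x i else 0)" for j
      have "\<forall>j. u j (w' j) \<ge> u j (x j)" using uw by (auto simp: w'_def)
      from aS[OF this] have "0 \<le> a \<bullet> (w - x i)"
        unfolding w'_def by (simp add: sum.distrib sum.delta)
      hence "0 \<le> p \<bullet> (w - x i)" unfolding p_def using agp by simp
      thus "p \<bullet> w \<ge> p \<bullet> x i" by (simp add: inner_diff_right)
    qed
    ultimately show ?thesis by blast
  qed
  show ?thesis using part1 part2 by blast
qed

end
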